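(* Let $p$ be an odd prime, $\omega=e^{2\pi i/p}$, $m\ge1$, $Q=T_{(p^m)}$ and $K=K_Q(p)$. Every maximal $p$-torsion abelian subgroup of $K$ is either the subgroup $T_{(p)}$ or a subgroup of the form $\langle\omega\mathbbm{1},S_\xi X\rangle$ with $S_\xi\in Q$. Any two distinct maximal $p$-torsion abelian subgroups of $K$ intersect in the center $Z(K)=\langle\omega\mathbbm{1}\rangle$.
   Context: Let $\{|q\rangle:q\in\mathbb{Z}_p\}$ be the computational basis of $\mathbb{C}^p$ and $X|q\rangle=|q+1\rangle$. For $\xi:\mathbb{Z}_p\to U(1)$ let $S_\xi=\mathrm{diag}(\xi(0),\dots,\xi(p-1))$. $T=\{S_\xi:\prod_{q}\xi(q)=1\}$ and $T_{(p^k)}=\{S\in T:S^{p^k}=\mathbbm{1}\}$. $K_Q(p)$ is the subgroup of $SU(p)$ generated by all $S_\xi X^b$ with $S_\xi\in Q$, $b\in\mathbb{Z}_p$. A subgroup is $p$-torsion abelian if it is abelian and every element $M$ in it satisfies $M^p=\mathbbm{1}$; maximal refers to inclusion among such subgroups. *)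

theory Defs
  imports Complex_Main "Jordan_Normal_Form.Matrix"
begin

text \<open>p x p complex matrices; the computational basis |q>, q in Z_p, is indexed by 0..p-1.\<close>

definition Xmat :: "nat \<Rightarrow> complex mat" where
  "Xmat p = mat p p (\<lambda>(i,j). if i = (j + 1) mod p then 1 else 0)"

definition Smat :: "nat \<Rightarrow> (nat \<Rightarrow> complex) \<Rightarrow> complex mat" where
  "Smat p \<xi> = mat p p (\<lambda>(i,j). if i = j then \<xi> i else 0)"

definition Ttorus :: "nat \<Rightarrow> complex mat set" where
  "Ttorus p = {Smat p \<xi> | \<xi>. (\<forall>q<p. cmod (\<xi> q) = 1) \<and> (\<Prod>q<p. \<xi> q) = 1}"

definition Ttors :: "nat \<Rightarrow> nat \<Rightarrow> complex mat set" where
  "Ttors p N = {S \<in> Ttorus p. S ^\<^sub>m N = 1\<^sub>m p}"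

definition is_subgrp :: "nat \<Rightarrow> complex mat set \<Rightarrow> bool" where
  "is_subgrp p H \<longleftrightarrow> H \<subseteq> carrier_mat p p \<and> 1\<^sub>m p \<in> H \<and>
     (\<forall>x\<in>H. \<forall>y\<in>H. x * y \<in> H) \<and> (\<forall>x\<in>H. \<exists>y\<in>H. x * y = 1\<^sub>m p \<and> y * x = 1\<^sub>m p)"

definition gen_grp :: "nat \<Rightarrow> complex mat set \<Rightarrow> complex mat set" where
  "gen_grp p A = \<Inter>{H. is_subgrp p H \<and> A \<subseteq> H}"

definition KQ :: "nat \<Rightarrow> complex mat set \<Rightarrow> complex mat set" where
  "KQ p Q = gen_grp p {S * (Xmat p ^\<^sub>m b) | S b. S \<in> Q \<and> b < p}"

definition ptors_abelian_sub :: "nat \<Rightarrow> complex mat set \<Rightarrow> complex mat set \<Rightarrow> bool" where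
  "ptors_abelian_sub p G H \<longleftrightarrow> is_subgrp p H \<and> H \<subseteq> G \<and>
     (\<forall>x\<in>H. \<forall>y\<in>H. x * y = y * x) \<and> (\<forall>M\<in>H. M ^\<^sub>m p = 1\<^sub>m p)"

definition max_ptors_abelian_sub :: "nat \<Rightarrow> complex mat set \<Rightarrow> complex mat set \<Rightarrow> bool" where
  "max_ptors_abelian_sub p G H \<longleftrightarrow> ptors_abelian_sub p G H \<and>
     (\<forall>H'. ptors_abelian_sub p G H' \<and> H \<subseteq> H' \<longrightarrow> H' = H)"

definition center_grp :: "complex mat set \<Rightarrow> complex mat set" where
  "center_grp G = {z \<in> G. \<forall>g\<in>G. z * g = g * z}"

end

theory Submission
  imports Defs
begin


lemma mod2p: "(x::nat) < 2*p \<Longrightarrow> x mod p = (if x < p then x else x - p)"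
proof (cases "x < p")
  case False
  assume "x < 2*p"
  then have "x - p < p" using False by simp
  then show ?thesis using False by (simp add: mod_if)
qed simp

lemma mod_shift2: "0 < (p::nat) \<Longrightarrow> k < p \<Longrightarrow> b < p \<Longrightarrow> i < p \<Longrightarrow> (i = (k + b) mod p) = (k = (i + p - b) mod p)"
  apply (simp add: mod2p) by arith

lemma mod_shift1: "0 < (p::nat) \<Longrightarrow> i < p \<Longrightarrow> b < p \<Longrightarrow> ((i + p - b) mod p + b) mod p = i"
  using mod_shift2[of p "(i + p - b) mod p" b i] by simp

definition Mm :: "nat \<Rightarrow> (nat \<Rightarrow> complex) \<Rightarrow> nat \<Rightarrow> complex mat" where
  "Mm p \<xi> b = mat p p (\<lambda>(i,j). if i = (j + b) mod p then \<xi> i else 0)"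

lemma Mm_carrier[simp]: "Mm p \<xi> b \<in> carrier_mat p p"
  by (simp add: Mm_def)

lemma Mm_dim[simp]: "dim_row (Mm p \<xi> b) = p" "dim_col (Mm p \<xi> b) = p"
  by (simp_all add: Mm_def)

lemma Mm_index[simp]: "i < p \<Longrightarrow> j < p \<Longrightarrow> Mm p \<xi> b $$ (i,j) = (if i = (j + b) mod p then \<xi> i else 0)"
  by (simp add: Mm_def)

lemma Mm_mult:
  assumes "0 < p" "b < p" "c < p"
  shows "Mm p \<xi> b * Mm p \<eta> c = Mm p (\<lambda>i. \<xi> i * \<eta> ((i + p - b) mod p)) ((b + c) mod p)"
proof (rule eq_matI)
  fix i k assume i: "i < dim_row (Mm p (\<lambda>i. \<xi> i * \<eta> ((i + p - b) mod p)) ((b + c) mod p))"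
     and k: "k < dim_col (Mm p (\<lambda>i. \<xi> i * \<eta> ((i + p - b) mod p)) ((b + c) mod p))"
  have i': "i < p" and k': "k < p" using i k by auto
  have "(Mm p \<xi> b * Mm p \<eta> c) $$ (i,k) = (\<Sum>j\<in>{0..<p}. Mm p \<xi> b $$ (i,j) * Mm p \<eta> c $$ (j,k))"
    using i' k' by (simp add: scalar_prod_def)
  also have "\<dots> = (\<Sum>j\<in>{0..<p}. if j = (k + c) mod p then (if i = (j + b) mod p then \<xi> i else 0) * \<eta> j else 0)"
    using i' k' by (intro sum.cong) auto
  also have "\<dots> = (if i = ((k + c) mod p + b) mod p then \<xi> i else 0) * \<eta> ((k + c) mod p)"
    using assms by (simp add: sum.delta')
  also have "\<dots> = Mm p (\<lambda>i. \<xi> i * \<eta> ((i + p - b) mod p)) ((b + c) mod p) $$ (i,k)"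
  proof -
    have e1: "((k + c) mod p + b) mod p = (k + (b + c) mod p) mod p"
      by (metis add.assoc add.commute mod_add_left_eq mod_add_right_eq)
    have e2: "i = ((k + c) mod p + b) mod p \<Longrightarrow> (k + c) mod p = (i + p - b) mod p"
      using mod_shift2[of p "(k + c) mod p" b i] assms i' by simp
    show ?thesis using i' k' e1 e2 by auto
  qed
  finally show "(Mm p \<xi> b * Mm p \<eta> c) $$ (i,k) = Mm p (\<lambda>i. \<xi> i * \<eta> ((i + p - b) mod p)) ((b + c) mod p) $$ (i,k)" .
qed auto

lemma Mm_cong: "(\<And>i. i < p \<Longrightarrow> \<xi> i = \<eta> i) \<Longrightarrow> b = c \<Longrightarrow> Mm p \<xi> b = Mm p \<eta> c"
  by (rule eq_matI) auto

lemma Mm_eq_shift: assumes "b < p" "c < p" "\<xi> b \<noteq> 0" "Mm p \<xi> b = Mm p \<eta> c" shows "b = c"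
proof -
  have "Mm p \<xi> b $$ (b,0) = Mm p \<eta> c $$ (b,0)" using assms by simp
  moreover have "Mm p \<xi> b $$ (b,0) = \<xi> b" using assms(1) by simp
  moreover have "Mm p \<eta> c $$ (b,0) = (if b = c then \<eta> b else 0)" using assms(1,2) by simp
  ultimately show ?thesis using assms(3) by (auto split: if_splits)
qed

lemma Mm_eq_fun: assumes "b < p" "Mm p \<xi> b = Mm p \<eta> b" "i < p" shows "\<xi> i = \<eta> i"
proof -
  have p: "0 < p" using assms by simp
  have "Mm p \<xi> b $$ (i,(i + p - b) mod p) = Mm p \<eta> b $$ (i,(i + p - b) mod p)" using assms by simp
  moreover have "Mm p \<xi> b $$ (i,(i + p - b) mod p) = \<xi> i" using assms(1,3) mod_shift1[OF p, of i b] p by simp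
  moreover have "Mm p \<eta> b $$ (i,(i + p - b) mod p) = \<eta> i" using assms(1,3) mod_shift1[OF p, of i b] p by simp
  ultimately show ?thesis by simp
qed

lemma Smat_Mm: "Smat p \<xi> = Mm p \<xi> 0"
  by (rule eq_matI) (auto simp: Smat_def)

lemma Xmat_Mm: "1 < p \<Longrightarrow> Xmat p = Mm p (\<lambda>_. 1) 1"
  by (rule eq_matI) (auto simp: Xmat_def)

lemma one_Mm: "1\<^sub>m p = Mm p (\<lambda>_. 1) 0"
  by (rule eq_matI) auto

lemma smult_one_Mm: "a \<cdot>\<^sub>m 1\<^sub>m p = Mm p (\<lambda>_. a) 0"
  by (rule eq_matI) auto

lemma Xpow_Mm: assumes "1 < p" shows "Xmat p ^\<^sub>m b = Mm p (\<lambda>_. 1) (b mod p)"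
proof (induction b)
  case 0
  then show ?case using assms by (simp add: one_Mm Xmat_def)
next
  case (Suc b)
  have "Xmat p ^\<^sub>m Suc b = Mm p (\<lambda>_. 1) (b mod p) * Mm p (\<lambda>_. 1) 1"
    using Suc assms by (simp add: Xmat_Mm)
  also have "\<dots> = Mm p (\<lambda>_. 1) ((b mod p + 1) mod p)"
    using assms by (subst Mm_mult) auto
  also have "(b mod p + 1) mod p = Suc b mod p" by (simp add: mod_Suc_eq)
  finally show ?case .
qed

lemma diag_pow_Mm: assumes "0 < p" shows "Mm p \<xi> 0 ^\<^sub>m n = Mm p (\<lambda>i. \<xi> i ^ n) 0"
proof (induction n)
  case 0
  then show ?case by (simp add: one_Mm)
next
  case (Suc n)
  have "Mm p \<xi> 0 ^\<^sub>m Suc n = Mm p (\<lambda>i. \<xi> i ^ n * \<xi> ((i + p - 0) mod p)) ((0 + 0) mod p)"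
    using Suc assms by (simp add: Mm_mult del: add_diff_assoc2 diff_zero add_0)
  also have "\<dots> = Mm p (\<lambda>i. \<xi> i ^ Suc n) 0"
    by (rule Mm_cong) (auto simp: mult.commute)
  finally show ?case .
qed

lemma bij_shift: "0 < (p::nat) \<Longrightarrow> bij_betw (\<lambda>i. (i + a) mod p) {..<p} {..<p}"
proof -
  assume p: "0 < p"
  have inj: "inj_on (\<lambda>i. (i + a) mod p) {..<p}"
  proof (rule inj_onI)
    fix x y assume x: "x \<in> {..<p}" and y: "y \<in> {..<p}" and e: "(x + a) mod p = (y + a) mod p"
    define r where "r = a mod p"
    have r: "r < p" using p by (simp add: r_def)
    have "(x + r) mod p = (y + r) mod p" using e unfolding r_def by (metis mod_add_right_eq)
    then have "(if x + r < p then x + r else x + r - p) = (if y + r < p then y + r else y + r - p)"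
      using x y r by (simp add: mod2p)
    then show "x = y" using x y r by (auto split: if_splits)
  qed
  have sub: "(\<lambda>i. (i + a) mod p) ` {..<p} \<subseteq> {..<p}" using p by auto
  show ?thesis
    using endo_inj_surj[OF _ sub inj] inj unfolding bij_betw_def by simp
qed

lemma prod_shift: "0 < (p::nat) \<Longrightarrow> (\<Prod>i<p. f ((i + a) mod p)) = (\<Prod>i<p. (f i :: complex))"
  using prod.reindex_bij_betw[OF bij_shift[of p a], of f] by simp



definition inT :: "nat \<Rightarrow> nat \<Rightarrow> (nat \<Rightarrow> complex) \<Rightarrow> bool" where
  "inT p N \<xi> \<longleftrightarrow> (\<forall>q<p. cmod (\<xi> q) = 1) \<and> (\<Prod>q<p. \<xi> q) = 1 \<and> (\<forall>q<p. \<xi> q ^ N = 1)"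

lemma inT_nz: "inT p N \<xi> \<Longrightarrow> q < p \<Longrightarrow> \<xi> q \<noteq> 0"
  unfolding inT_def by force

lemma inT_one: "inT p N (\<lambda>_. 1)"
  by (simp add: inT_def)

lemma inT_mult:
  assumes p: "0 < p" and b: "b \<le> p" and x: "inT p N \<xi>" and y: "inT p N \<eta>"
  shows "inT p N (\<lambda>i. \<xi> i * \<eta> ((i + p - b) mod p))"
proof -
  have e: "\<And>i. i + p - b = i + (p - b)" using b by simp
  have "(\<Prod>i<p. \<xi> i * \<eta> ((i + p - b) mod p)) = (\<Prod>i<p. \<xi> i) * (\<Prod>i<p. \<eta> ((i + (p - b)) mod p))"
    by (simp add: prod.distrib e)
  also have "\<dots> = 1" using x y prod_shift[OF p, of \<eta> "p - b"] by (simp add: inT_def)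
  finally show ?thesis using x y p by (auto simp: inT_def norm_mult power_mult_distrib)
qed

lemma inT_inv:
  assumes p: "0 < p" and x: "inT p N \<xi>"
  shows "inT p N (\<lambda>i. inverse (\<xi> ((i + b) mod p)))"
proof -
  have "(\<Prod>i<p. inverse (\<xi> ((i + b) mod p))) = inverse (\<Prod>i<p. \<xi> ((i + b) mod p))"
    using prod_inversef[of "\<lambda>i. \<xi> ((i + b) mod p)" "{..<p}"] by (simp add: o_def)
  also have "\<dots> = 1" using x prod_shift[OF p, of \<xi> b] by (simp add: inT_def)
  finally show ?thesis using x p by (auto simp: inT_def norm_inverse power_inverse)
qed

lemma Ttors_eq: assumes p: "0 < p" shows "Ttors p N = {Mm p \<xi> 0 | \<xi>. inT p N \<xi>}"
proof safe
  fix S assume "S \<in> Ttors p N"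
  then obtain \<xi> where S: "S = Mm p \<xi> 0" and u: "\<forall>q<p. cmod (\<xi> q) = 1" and pr: "(\<Prod>q<p. \<xi> q) = 1"
    and pw: "S ^\<^sub>m N = 1\<^sub>m p"
    unfolding Ttors_def Ttorus_def by (auto simp: Smat_Mm)
  have "Mm p (\<lambda>i. \<xi> i ^ N) 0 = Mm p (\<lambda>_. 1) 0"
    using pw S diag_pow_Mm[OF p] by (simp add: one_Mm)
  then have "\<forall>q<p. \<xi> q ^ N = 1" using Mm_eq_fun[OF p] by blast
  then show "\<exists>\<xi>. S = Mm p \<xi> 0 \<and> inT p N \<xi>" using S u pr by (auto simp: inT_def)
next
  fix \<xi> assume x: "inT p N \<xi>"
  have "Mm p \<xi> 0 ^\<^sub>m N = Mm p (\<lambda>i. \<xi> i ^ N) 0" by (simp add: diag_pow_Mm[OF p])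
  also have "\<dots> = Mm p (\<lambda>_. 1) 0" by (rule Mm_cong) (use x in \<open>auto simp: inT_def\<close>)
  finally have "Mm p \<xi> 0 ^\<^sub>m N = Mm p (\<lambda>_. 1) 0" .
  then show "Mm p \<xi> 0 \<in> Ttors p N" using x unfolding Ttors_def Ttorus_def
    by (auto simp: Smat_Mm one_Mm inT_def)
qed

definition Kset :: "nat \<Rightarrow> nat \<Rightarrow> complex mat set" where
  "Kset p N = {Mm p \<xi> b | \<xi> b. inT p N \<xi> \<and> b < p}"

lemma gens_eq: assumes p: "1 < p"
  shows "{S * (Xmat p ^\<^sub>m b) | S b. S \<in> Ttors p N \<and> b < p} = Kset p N"
proof -
  have p0: "0 < p" using p by simp
  have e: "\<And>\<xi> b. b < p \<Longrightarrow> Mm p \<xi> 0 * Xmat p ^\<^sub>m b = Mm p \<xi> b"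
  proof -
    fix \<xi> :: "nat \<Rightarrow> complex" and b assume b: "b < p"
    have "Mm p \<xi> 0 * Xmat p ^\<^sub>m b = Mm p \<xi> 0 * Mm p (\<lambda>_. 1) b" using b by (simp add: Xpow_Mm[OF p])
    also have "\<dots> = Mm p (\<lambda>i. \<xi> i * 1) ((0 + b) mod p)" using b p0 by (subst Mm_mult) auto
    also have "\<dots> = Mm p \<xi> b" using b by simp
    finally show "Mm p \<xi> 0 * Xmat p ^\<^sub>m b = Mm p \<xi> b" .
  qed
  show ?thesis
  proof
    show "{S * Xmat p ^\<^sub>m b |S b. S \<in> Ttors p N \<and> b < p} \<subseteq> Kset p N"
      unfolding Ttors_eq[OF p0] using e by (auto simp: Kset_def)
    show "Kset p N \<subseteq> {S * Xmat p ^\<^sub>m b |S b. S \<in> Ttors p N \<and> b < p}"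
    proof
      fix x assume "x \<in> Kset p N"
      then obtain \<xi> b where x: "x = Mm p \<xi> b" "inT p N \<xi>" "b < p" by (auto simp: Kset_def)
      have "Mm p \<xi> 0 \<in> Ttors p N" unfolding Ttors_eq[OF p0] using x by blast
      then show "x \<in> {S * Xmat p ^\<^sub>m b |S b. S \<in> Ttors p N \<and> b < p}"
        using e[of b \<xi>] x by (auto intro!: exI[of _ "Mm p \<xi> 0"] exI[of _ b])
    qed
  qed
qed

lemma KsetI: "inT p N \<zeta> \<Longrightarrow> d < p \<Longrightarrow> Mm p \<zeta> d \<in> Kset p N"
  unfolding Kset_def by blast

lemma gen_grp_least: "is_subgrp p H \<Longrightarrow> A \<subseteq> H \<Longrightarrow> gen_grp p A \<subseteq> H"
  unfolding gen_grp_def by blast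

lemma gen_grp_char: assumes "is_subgrp p W" "A \<subseteq> W" "\<And>H. is_subgrp p H \<Longrightarrow> A \<subseteq> H \<Longrightarrow> W \<subseteq> H"
  shows "gen_grp p A = W"
  using assms unfolding gen_grp_def by blast

lemma gen_grp_self: "is_subgrp p A \<Longrightarrow> gen_grp p A = A"
  by (rule gen_grp_char) auto

lemma Kset_subgrp: assumes p: "1 < p" shows "is_subgrp p (Kset p N)"
proof -
  have p0: "0 < p" using p by simp
  have mult: "x * y \<in> Kset p N" if xK: "x \<in> Kset p N" and yK: "y \<in> Kset p N" for x y
  proof -
    obtain \<xi> b where x: "x = Mm p \<xi> b" "inT p N \<xi>" "b < p" using xK by (auto simp: Kset_def)
    obtain \<eta> c where y: "y = Mm p \<eta> c" "inT p N \<eta>" "c < p" using yK by (auto simp: Kset_def)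
    have "x * y = Mm p (\<lambda>i. \<xi> i * \<eta> ((i + p - b) mod p)) ((b + c) mod p)"
      using x y p0 by (simp add: Mm_mult)
    then show ?thesis using KsetI[OF inT_mult[OF p0 _ x(2) y(2), of b], of "(b + c) mod p"] x y p0 by auto
  qed
  have inv: "\<exists>y\<in>Kset p N. x * y = 1\<^sub>m p \<and> y * x = 1\<^sub>m p" if xK: "x \<in> Kset p N" for x
  proof -
    obtain \<xi> b where x: "x = Mm p \<xi> b" "inT p N \<xi>" "b < p" using xK by (auto simp: Kset_def)
    define \<eta> where "\<eta> = (\<lambda>i. inverse (\<xi> ((i + b) mod p)))"
    define c where "c = (p - b) mod p"
    have c: "c < p" using p0 by (simp add: c_def)
    have y: "Mm p \<eta> c \<in> Kset p N" using inT_inv[OF p0 x(2), of b] c by (auto simp: Kset_def \<eta>_def)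
    have "x * Mm p \<eta> c = Mm p (\<lambda>i. \<xi> i * \<eta> ((i + p - b) mod p)) ((b + c) mod p)"
      using x c p0 by (simp add: Mm_mult)
    also have "\<dots> = Mm p (\<lambda>_. 1) 0"
    proof (rule Mm_cong)
      fix i assume i: "i < p"
      show "\<xi> i * \<eta> ((i + p - b) mod p) = 1"
        using mod_shift1[OF p0 i x(3)] inT_nz[OF x(2) i] by (simp add: \<eta>_def)
    next
      show "(b + c) mod p = 0" unfolding c_def using x(3)
        by (metis add_diff_inverse_nat less_imp_le_nat mod_add_right_eq mod_self not_less)
    qed
    finally have 1: "x * Mm p \<eta> c = 1\<^sub>m p" by (simp add: one_Mm)
    have "Mm p \<eta> c * x = Mm p (\<lambda>i. \<eta> i * \<xi> ((i + p - c) mod p)) ((c + b) mod p)"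
      using x c p0 by (simp add: Mm_mult)
    also have "\<dots> = Mm p (\<lambda>_. 1) 0"
    proof (rule Mm_cong)
      fix i assume i: "i < p"
      have "(i + p - c) mod p = (i + b) mod p"
      proof (cases "b = 0")
        case True then show ?thesis by (simp add: c_def)
      next
        case False then have "c = p - b" using x(3) by (simp add: c_def)
        then show ?thesis using x(3) by simp
      qed
      moreover have "(i + b) mod p < p" using p0 by simp
      ultimately show "\<eta> i * \<xi> ((i + p - c) mod p) = 1"
        using inT_nz[OF x(2)] by (simp add: \<eta>_def)
    next
      show "(c + b) mod p = 0" unfolding c_def using x(3)
        by (metis add.commute add_diff_inverse_nat less_imp_le_nat mod_add_left_eq mod_self not_less)
    qed
    finally have 2: "Mm p \<eta> c * x = 1\<^sub>m p" by (simp add: one_Mm)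
    show ?thesis using 1 2 y by blast
  qed
  have one: "1\<^sub>m p \<in> Kset p N" unfolding Kset_def one_Mm using inT_one p0 by blast
  have car: "Kset p N \<subseteq> carrier_mat p p" by (auto simp: Kset_def)
  show ?thesis unfolding is_subgrp_def using mult inv one car by blast
qed

lemma KQ_eq: "1 < p \<Longrightarrow> KQ p (Ttors p N) = Kset p N"
  unfolding KQ_def by (simp add: gens_eq gen_grp_self Kset_subgrp)



lemma pow_add_mat: assumes A: "(A :: complex mat) \<in> carrier_mat n n" shows "A ^\<^sub>m (a + b) = A ^\<^sub>m a * A ^\<^sub>m b"
proof (induction b)
  case 0 then show ?case using A by simp
next
  case (Suc b)
  have "A ^\<^sub>m (a + Suc b) = (A ^\<^sub>m a * A ^\<^sub>m b) * A" using Suc by simp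
  also have "\<dots> = A ^\<^sub>m a * (A ^\<^sub>m b * A)" using A by (simp add: assoc_mult_mat[of _ n n _ n _ n])
  finally show ?case by simp
qed

lemma pow_comm_self: assumes A: "(A :: complex mat) \<in> carrier_mat n n" shows "A ^\<^sub>m a * A ^\<^sub>m b = A ^\<^sub>m b * A ^\<^sub>m a"
  using pow_add_mat[OF A, of a b] pow_add_mat[OF A, of b a] by (simp add: add.commute)

lemma pow_pow_mat: assumes A: "(A :: complex mat) \<in> carrier_mat n n" shows "A ^\<^sub>m (a * b) = (A ^\<^sub>m a) ^\<^sub>m b"
proof (induction b)
  case 0 then show ?case using A by simp
next
  case (Suc b)
  have "A ^\<^sub>m (a * Suc b) = A ^\<^sub>m (a * b) * A ^\<^sub>m a" using pow_add_mat[OF A, of "a * b" a] by (simp add: add.commute)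
  then show ?case using Suc by simp
qed

lemma one_pow_mat: "(1\<^sub>m n :: complex mat) ^\<^sub>m k = 1\<^sub>m n"
  by (induction k) auto

lemma comm_pow_mat: assumes A: "(A :: complex mat) \<in> carrier_mat n n" and B: "B \<in> carrier_mat n n"
  and c: "A * B = B * A" shows "(A * B) ^\<^sub>m k = A ^\<^sub>m k * B ^\<^sub>m k"
proof -
  have bk: "B ^\<^sub>m j * A = A * B ^\<^sub>m j" for j
  proof (induction j)
    case 0 then show ?case using A B by simp
  next
    case (Suc j)
    have "B ^\<^sub>m Suc j * A = B ^\<^sub>m j * (B * A)" using A B by (simp add: assoc_mult_mat[of _ n n _ n _ n])
    also have "\<dots> = (B ^\<^sub>m j * A) * B" using A B c by (simp add: assoc_mult_mat[of _ n n _ n _ n])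
    also have "\<dots> = A * (B ^\<^sub>m j * B)" using A B Suc by (simp add: assoc_mult_mat[of _ n n _ n _ n])
    finally show ?case by simp
  qed
  show ?thesis
  proof (induction k)
    case 0 then show ?case using A B by simp
  next
    case (Suc k)
    have "(A * B) ^\<^sub>m Suc k = (A ^\<^sub>m k * B ^\<^sub>m k) * (A * B)" using Suc by simp
    also have "\<dots> = A ^\<^sub>m k * ((B ^\<^sub>m k * A) * B)" using A B by (simp add: assoc_mult_mat[of _ n n _ n _ n])
    also have "\<dots> = A ^\<^sub>m k * ((A * B ^\<^sub>m k) * B)" using bk by simp
    also have "\<dots> = A ^\<^sub>m k * (A * (B ^\<^sub>m k * B))" using A B by (simp add: assoc_mult_mat[of _ n n _ n _ n])
    also have "\<dots> = (A ^\<^sub>m k * A) * (B ^\<^sub>m k * B)" using A B by (intro assoc_mult_mat[symmetric, of _ n n _ n _ n]) auto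
    finally show ?case by simp
  qed
qed

lemma root_unity_pow:
  assumes p: "0 < p" and z: "(z::complex) ^ p = 1"
  shows "\<exists>j<p. z = cis (2 * pi / real p) ^ j"
proof -
  have "z \<in> (\<lambda>k. cis (2 * pi * real k / real p)) ` {..<p}"
    using bij_betw_roots_unity[OF p] z unfolding bij_betw_def by auto
  then obtain k where k: "k < p" "z = cis (2 * pi * real k / real p)" by auto
  have "cis (2 * pi / real p) ^ k = cis (2 * pi * real k / real p)" by (simp add: DeMoivre mult_ac)
  then show ?thesis using k by auto
qed

lemma omega_pow_p: "0 < p \<Longrightarrow> cis (2 * pi / real p) ^ p = 1"
  by (simp add: DeMoivre)

lemma omega_neq: assumes p: "0 < p" "j < p" "k < p" "j \<noteq> k"
  shows "cis (2 * pi / real p) ^ j \<noteq> cis (2 * pi / real p) ^ k"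
proof -
  have "inj_on (\<lambda>k. cis (2 * pi * real k / real p)) {..<p}"
    using bij_betw_roots_unity[OF p(1)] unfolding bij_betw_def by auto
  then have "cis (2 * pi * real j / real p) \<noteq> cis (2 * pi * real k / real p)"
    using p unfolding inj_on_def by auto
  then show ?thesis by (simp add: DeMoivre mult_ac)
qed

lemma omega_norm: "cmod (cis (2 * pi / real p) ^ j) = 1"
  by (simp add: norm_power)



locale cycset =
  fixes p N :: nat and \<omega> :: complex
  assumes p3: "3 \<le> p" and pprime: "prime p" and pN: "p dvd N" and om: "\<omega> = cis (2 * pi / real p)"
begin

lemma p0: "0 < p" using p3 by simp
lemma p1: "1 < p" using p3 by simp

lemma om_p: "\<omega> ^ p = 1" using omega_pow_p[OF p0] om by simp
lemma om_N: "\<omega> ^ N = 1"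
proof -
  obtain k where "N = p * k" using pN by blast
  then show ?thesis by (simp add: power_mult om_p)
qed
lemma om_norm: "cmod (\<omega> ^ j) = 1" using omega_norm om by simp
lemma om_norm1: "cmod \<omega> = 1" using om_norm[of 1] by simp

lemma Kset_pow:
  assumes x: "inT p N \<xi>" "b < p"
  shows "\<exists>\<eta>. inT p N \<eta> \<and> Mm p \<xi> b ^\<^sub>m n = Mm p \<eta> ((n * b) mod p)"
proof (induction n)
  case 0 then show ?case using inT_one by (auto simp: one_Mm)
next
  case (Suc n)
  then obtain \<eta> where e: "inT p N \<eta>" "Mm p \<xi> b ^\<^sub>m n = Mm p \<eta> ((n * b) mod p)" by blast
  have "Mm p \<xi> b ^\<^sub>m Suc n = Mm p \<eta> ((n * b) mod p) * Mm p \<xi> b" using e by simp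
  also have "\<dots> = Mm p (\<lambda>i. \<eta> i * \<xi> ((i + p - (n * b) mod p) mod p)) (((n * b) mod p + b) mod p)"
    using x p0 by (simp add: Mm_mult)
  also have "((n * b) mod p + b) mod p = (Suc n * b) mod p" by (metis mod_add_left_eq mult_Suc add.commute)
  finally show ?case using inT_mult[OF p0 _ e(1) x(1), of "(n * b) mod p"] p0 by auto
qed

lemma subgrp_pow: assumes "is_subgrp p H" "x \<in> H" shows "x ^\<^sub>m n \<in> H"
proof (induction n)
  case 0
  have "dim_row x = p" using assms unfolding is_subgrp_def by auto
  then show ?case using assms unfolding is_subgrp_def by auto
next
  case (Suc n) then show ?case using assms unfolding is_subgrp_def by auto
qed

abbreviation sc :: "nat \<Rightarrow> complex mat" where "sc j \<equiv> Mm p (\<lambda>_. \<omega> ^ j) 0"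

lemma sc_mult: "sc j * sc k = sc (j + k)"
  using p0 by (simp add: Mm_mult power_add)

lemma sc_comm: assumes "b < p" shows "sc j * Mm p \<xi> b = Mm p \<xi> b * sc j"
proof -
  have "sc j * Mm p \<xi> b = Mm p (\<lambda>i. \<omega> ^ j * \<xi> ((i + p - 0) mod p)) ((0 + b) mod p)"
    using assms p0 by (subst Mm_mult) auto
  also have "\<dots> = Mm p (\<lambda>i. \<xi> i * (\<lambda>_. \<omega> ^ j) ((i + p - b) mod p)) ((b + 0) mod p)"
    by (rule Mm_cong) (auto simp: mult.commute)
  also have "\<dots> = Mm p \<xi> b * sc j" using assms p0 by (subst Mm_mult) auto
  finally show ?thesis .
qed

lemma sc_pow: "(\<omega> \<cdot>\<^sub>m 1\<^sub>m p) ^\<^sub>m j = sc j"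
  by (simp add: smult_one_Mm diag_pow_Mm[OF p0])

lemma sc_one: "p dvd j \<Longrightarrow> sc j = 1\<^sub>m p"
proof -
  assume "p dvd j" then obtain k where "j = p * k" by blast
  then have "\<omega> ^ j = 1" by (simp add: power_mult om_p)
  then show ?thesis by (simp add: one_Mm)
qed

lemma sc_zero: "sc 0 = 1\<^sub>m p" by (simp add: one_Mm)

lemma inT_sc: "p dvd M \<Longrightarrow> inT p M (\<lambda>_. \<omega> ^ j)"
proof -
  assume "p dvd M" then obtain k where k: "M = p * k" by blast
  have "(\<omega> ^ j) ^ M = (\<omega> ^ p) ^ (j * k)"
    unfolding k by (simp only: power_mult[symmetric]) (simp add: algebra_simps)
  then have 1: "(\<omega> ^ j) ^ M = 1" by (simp add: om_p)
  have "(\<Prod>q<p. \<omega> ^ j) = (\<omega> ^ p) ^ j"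
    by (simp add: power_mult[symmetric] mult.commute)
  then have 2: "(\<Prod>q<p. \<omega> ^ j) = 1" by (simp add: om_p)
  show ?thesis using om_norm 1 2 unfolding inT_def by blast
qed

lemma sc_K: "sc j \<in> Kset p N" using KsetI[OF inT_sc[OF pN] p0] .

lemma sc_T: "sc j \<in> Ttors p p" unfolding Ttors_eq[OF p0] using inT_sc[of p j] by auto

lemma diag_comm_const:
  assumes tau: "\<And>i. i < p \<Longrightarrow> \<tau> i \<noteq> 0"
    and c: "Mm p \<eta> 0 * Mm p \<tau> 1 = Mm p \<tau> 1 * Mm p \<eta> 0"
  shows "\<And>i. i < p \<Longrightarrow> \<eta> i = \<eta> 0"
proof -
  have "Mm p (\<lambda>i. \<eta> i * \<tau> ((i + p - 0) mod p)) ((0 + 1) mod p) = Mm p (\<lambda>i. \<tau> i * \<eta> ((i + p - 1) mod p)) ((1 + 0) mod p)"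
    using c p1 by (simp add: Mm_mult)
  then have e: "Mm p (\<lambda>i. \<eta> i * \<tau> ((i + p - 0) mod p)) 1 = Mm p (\<lambda>i. \<tau> i * \<eta> ((i + p - 1) mod p)) 1"
    using p1 by simp
  have st: "\<eta> i = \<eta> ((i + p - 1) mod p)" if i: "i < p" for i
    using Mm_eq_fun[OF p1 e i] tau[OF i] i by (simp add: mult.commute)
  fix i assume "i < p"
  then show "\<eta> i = \<eta> 0"
  proof (induction i)
    case 0 then show ?case by simp
  next
    case (Suc k)
    have "(Suc k + p - 1) mod p = k" using Suc by simp
    then show ?case using st[OF Suc.prems] Suc by simp
  qed
qed

lemma const_sc: assumes "\<And>i. i < p \<Longrightarrow> \<eta> i = \<eta> 0" "\<eta> 0 ^ p = 1"
  shows "\<exists>j. Mm p \<eta> 0 = sc j"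
proof -
  obtain j where j: "\<eta> 0 = cis (2 * pi / real p) ^ j" using root_unity_pow[OF p0 assms(2)] by blast
  have "Mm p \<eta> 0 = sc j"
  proof (rule Mm_cong)
    fix i assume "i < p"
    then show "\<eta> i = \<omega> ^ j" using assms(1) j unfolding om by metis
  qed simp
  then show ?thesis by blast
qed

definition Zs :: "complex mat set" where "Zs = {sc j | j. True}"

lemma Zs_subgrp: "is_subgrp p Zs"
  unfolding is_subgrp_def
proof (intro conjI ballI)
  show "Zs \<subseteq> carrier_mat p p" unfolding Zs_def by auto
  show "1\<^sub>m p \<in> Zs" unfolding Zs_def by (intro CollectI exI[of _ 0]) (simp add: one_Mm)
next
  fix x y assume "x \<in> Zs" "y \<in> Zs"
  then obtain j k where "x = sc j" "y = sc k" unfolding Zs_def by auto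
  then show "x * y \<in> Zs" unfolding Zs_def using sc_mult by auto
next
  fix x assume "x \<in> Zs"
  then obtain j where x: "x = sc j" unfolding Zs_def by auto
  have e: "j + j * (p - 1) = p * j" "j * (p - 1) + j = p * j" using p0 by (cases p; simp add: algebra_simps)+
  have d: "p dvd (j + j * (p - 1))" "p dvd (j * (p - 1) + j)" unfolding e by simp_all
  have "sc j * sc (j * (p - 1)) = 1\<^sub>m p" "sc (j * (p - 1)) * sc j = 1\<^sub>m p"
    by (simp_all only: sc_mult sc_one[OF d(1)] sc_one[OF d(2)])
  then show "\<exists>y\<in>Zs. x * y = 1\<^sub>m p \<and> y * x = 1\<^sub>m p" unfolding Zs_def x by blast
qed

lemma gen_Z: "gen_grp p {\<omega> \<cdot>\<^sub>m 1\<^sub>m p} = Zs"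
proof (rule gen_grp_char[OF Zs_subgrp])
  have "\<omega> \<cdot>\<^sub>m 1\<^sub>m p = sc 1" by (simp add: smult_one_Mm)
  then show "{\<omega> \<cdot>\<^sub>m 1\<^sub>m p} \<subseteq> Zs" unfolding Zs_def by (simp add: exI[of _ 1])
next
  fix H assume H: "is_subgrp p H" "{\<omega> \<cdot>\<^sub>m 1\<^sub>m p} \<subseteq> H"
  show "Zs \<subseteq> H" unfolding Zs_def using subgrp_pow[OF H(1), of "\<omega> \<cdot>\<^sub>m 1\<^sub>m p"] H(2) sc_pow by auto
qed

end



lemma inv_mod_exists:
  assumes p: "prime (p::nat)" and c: "0 < c" "c < p"
  shows "\<exists>k. (k * c) mod p = 1"
proof -
  have "\<not> p dvd c" using c by (auto dest: dvd_imp_le)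
  then have "coprime p c" using prime_imp_coprime[OF p] by blast
  then have g: "gcd c p = 1" by (simp add: coprime_iff_gcd_eq_1 gcd.commute)
  obtain x y where "c * x = p * y + gcd c p" using bezout_nat[of c p] c by auto
  then have "x * c = p * y + 1" using g by (simp add: mult.commute)
  moreover have "1 < p" using p c by simp
  ultimately have "(x * c) mod p = 1" by (metis add.commute mod_less mod_mult_self2)
  then show ?thesis by blast
qed

lemma inT_cong: "inT p N \<xi> \<Longrightarrow> (\<And>i. i < p \<Longrightarrow> \<xi> i = \<eta> i) \<Longrightarrow> inT p N \<eta>"
proof -
  assume a: "inT p N \<xi>" and e: "\<And>i. i < p \<Longrightarrow> \<xi> i = \<eta> i"
  have "(\<Prod>q<p. \<xi> q) = (\<Prod>q<p. \<eta> q)" using e by (intro prod.cong) auto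
  then show "inT p N \<eta>" using a e unfolding inT_def by auto
qed

lemma diag_mult: "0 < p \<Longrightarrow> Mm p \<xi> 0 * Mm p \<eta> 0 = Mm p (\<lambda>i. \<xi> i * \<eta> i) 0"
  by (simp add: Mm_mult) (rule Mm_cong, auto)

context cycset begin

definition dl :: "nat \<Rightarrow> complex" where
  "dl = (\<lambda>i::nat. (if i = 0 then \<omega> else 1) * (if i = 1 then \<omega> ^ (p - 1) else 1))"

lemma dl0: "dl 0 = \<omega>" by (simp add: dl_def)

lemma dl_prod: "(\<Prod>i<p. dl i) = 1"
proof -
  have "(\<Prod>i<p. dl i) = (\<Prod>i<p. (if i = 0 then \<omega> else 1)) * (\<Prod>i<p. (if i = 1 then \<omega> ^ (p - 1) else 1))"
    unfolding dl_def by (rule prod.distrib)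
  also have "\<dots> = \<omega> * \<omega> ^ (p - 1)" using p1 by (simp add: prod.delta)
  also have "\<dots> = \<omega> ^ Suc (p - 1)" by simp
  also have "Suc (p - 1) = p" using p0 by simp
  finally show ?thesis using om_p by simp
qed


lemma dl_inT: "inT p N dl"
proof -
  have nm: "cmod (dl i) = 1" for i using om_norm om_norm1 by (simp add: dl_def norm_mult)
  have pw: "dl i ^ N = 1" for i
  proof -
    have "(\<omega> ^ (p - 1)) ^ N = (\<omega> ^ N) ^ (p - 1)" by (simp only: power_mult[symmetric] mult.commute)
    then have "(\<omega> ^ (p - 1)) ^ N = 1" using om_N by simp
    then show ?thesis using om_N by (simp add: dl_def power_mult_distrib)
  qed
  show ?thesis unfolding inT_def using dl_prod nm pw by auto
qed

lemma dl_ne: assumes "0 < c" "c < p" shows "dl c \<noteq> dl 0"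
proof (cases "c = 1")
  case True
  then have "dl c = \<omega> ^ (p - 1)" by (simp add: dl_def)
  moreover have "\<omega> ^ 1 \<noteq> \<omega> ^ (p - 1)" unfolding om using omega_neq[OF p0, of 1 "p - 1"] p3 by simp
  ultimately show ?thesis using dl0 by simp
next
  case False
  then have "dl c = 1" using assms by (simp add: dl_def)
  moreover have "\<omega> ^ 1 \<noteq> \<omega> ^ 0" unfolding om using omega_neq[OF p0, of 1 0] p3 by simp
  ultimately show ?thesis using dl0 by simp
qed


lemma center_sub: assumes zK: "z \<in> Kset p N" and comm: "\<And>g. g \<in> Kset p N \<Longrightarrow> z * g = g * z"
  shows "z \<in> Zs"
proof -
  obtain \<eta> c where z: "z = Mm p \<eta> c" "inT p N \<eta>" "c < p" using zK unfolding Kset_def by auto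
  have c0: "c = 0"
  proof (rule ccontr)
    assume cn: "c \<noteq> 0"
    have "z * Mm p dl 0 = Mm p dl 0 * z" by (rule comm[OF KsetI[OF dl_inT p0]])
    then have "Mm p \<eta> c * Mm p dl 0 = Mm p dl 0 * Mm p \<eta> c" unfolding z(1) .
    then have "Mm p (\<lambda>i. \<eta> i * dl ((i + p - c) mod p)) ((c + 0) mod p) = Mm p (\<lambda>i. dl i * \<eta> ((i + p - 0) mod p)) ((0 + c) mod p)"
      using z(3) p0 by (simp only: Mm_mult)
    then have "Mm p (\<lambda>i. \<eta> i * dl ((i + p - c) mod p)) c = Mm p (\<lambda>i. dl i * \<eta> ((i + p - 0) mod p)) c"
      using z(3) by simp
    from Mm_eq_fun[OF z(3) this z(3)] have "\<eta> c * dl 0 = dl c * \<eta> c" using z(3) by simp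
    then have e: "dl 0 = dl c" using inT_nz[OF z(2) z(3)] by simp
    then show False using dl_ne[of c] cn z(3) by simp
  qed
  have X: "Mm p (\<lambda>_. 1) 1 \<in> Kset p N" using KsetI[OF inT_one p1] .
  have "z * Mm p (\<lambda>_. 1) 1 = Mm p (\<lambda>_. 1) 1 * z" by (rule comm[OF X])
  then have "Mm p \<eta> 0 * Mm p (\<lambda>_. 1) 1 = Mm p (\<lambda>_. 1) 1 * Mm p \<eta> 0" unfolding z(1) c0 .
  note cm = this
  have one_nz: "\<And>i. i < p \<Longrightarrow> (\<lambda>_. 1::complex) i \<noteq> 0" by simp
  have const: "\<And>i. i < p \<Longrightarrow> \<eta> i = \<eta> 0" by (rule diag_comm_const[OF one_nz cm])
  have "(\<Prod>q<p. \<eta> q) = (\<Prod>q<p. \<eta> 0)" by (rule prod.cong) (auto intro: const)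
  then have "\<eta> 0 ^ p = 1" using z(2) unfolding inT_def by simp
  from const_sc[of \<eta>, OF const this] obtain j where "Mm p \<eta> 0 = sc j" by blast
  then show "z \<in> Zs" unfolding Zs_def z(1) c0 by blast
qed


lemma center_K: "center_grp (Kset p N) = Zs"
proof
  show "Zs \<subseteq> center_grp (Kset p N)"
  proof
    fix z assume "z \<in> Zs"
    then obtain j where z: "z = sc j" unfolding Zs_def by auto
    have "\<forall>g\<in>Kset p N. z * g = g * z"
    proof
      fix g assume "g \<in> Kset p N"
      then obtain \<xi> b where "g = Mm p \<xi> b" "b < p" unfolding Kset_def by auto
      then show "z * g = g * z" using sc_comm z by simp
    qed
    then show "z \<in> center_grp (Kset p N)" unfolding center_grp_def using sc_K z by auto
  qed
next
  show "center_grp (Kset p N) \<subseteq> Zs"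
    using center_sub unfolding center_grp_def by blast
qed

lemma inT_pp: "inT p p \<xi> \<Longrightarrow> inT p N \<xi>"
proof -
  assume a: "inT p p \<xi>"
  obtain k where k: "N = p * k" using pN by blast
  show ?thesis using a unfolding inT_def k by (simp add: power_mult)
qed

lemma T_ptors: "ptors_abelian_sub p (Kset p N) (Ttors p p)"
proof -
  have Te: "Ttors p p = {Mm p \<xi> 0 | \<xi>. inT p p \<xi>}" by (rule Ttors_eq[OF p0])
  have sub: "is_subgrp p (Ttors p p)"
    unfolding is_subgrp_def
  proof (intro conjI ballI)
    show "Ttors p p \<subseteq> carrier_mat p p" unfolding Te by auto
    show "1\<^sub>m p \<in> Ttors p p" unfolding Te one_Mm using inT_one by blast
  next
    fix x y assume "x \<in> Ttors p p" "y \<in> Ttors p p"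
    then obtain \<xi> \<eta> where x: "x = Mm p \<xi> 0" "inT p p \<xi>" and y: "y = Mm p \<eta> 0" "inT p p \<eta>"
      unfolding Te by auto
    have "inT p p (\<lambda>i. \<xi> i * \<eta> i)"
      using inT_cong[OF inT_mult[OF p0 _ x(2) y(2), of 0]] by simp
    then show "x * y \<in> Ttors p p" unfolding Te using x y diag_mult[OF p0] by auto
  next
    fix x assume "x \<in> Ttors p p"
    then obtain \<xi> where x: "x = Mm p \<xi> 0" "inT p p \<xi>" unfolding Te by auto
    have iT: "inT p p (\<lambda>i. inverse (\<xi> i))"
      using inT_cong[OF inT_inv[OF p0 x(2), of 0]] by simp
    have "Mm p (\<lambda>i. \<xi> i * inverse (\<xi> i)) 0 = 1\<^sub>m p" "Mm p (\<lambda>i. inverse (\<xi> i) * \<xi> i) 0 = 1\<^sub>m p"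
      unfolding one_Mm using inT_nz[OF x(2)] by (auto intro!: Mm_cong)
    then have "x * Mm p (\<lambda>i. inverse (\<xi> i)) 0 = 1\<^sub>m p" "Mm p (\<lambda>i. inverse (\<xi> i)) 0 * x = 1\<^sub>m p"
      using x diag_mult[OF p0] by auto
    then show "\<exists>y\<in>Ttors p p. x * y = 1\<^sub>m p \<and> y * x = 1\<^sub>m p" using iT unfolding Te by blast
  qed
  have inK: "Ttors p p \<subseteq> Kset p N" unfolding Te using KsetI[OF inT_pp p0] by auto
  have ab: "\<forall>x\<in>Ttors p p. \<forall>y\<in>Ttors p p. x * y = y * x"
  proof (intro ballI)
    fix x y assume "x \<in> Ttors p p" "y \<in> Ttors p p"
    then obtain \<xi> \<eta> where x: "x = Mm p \<xi> 0" and y: "y = Mm p \<eta> 0" unfolding Te by auto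
    have "Mm p (\<lambda>i. \<xi> i * \<eta> i) 0 = Mm p (\<lambda>i. \<eta> i * \<xi> i) 0" by (rule Mm_cong) (auto simp: mult.commute)
    then show "x * y = y * x" using x y diag_mult[OF p0] by simp
  qed
  have pt: "\<forall>M\<in>Ttors p p. M ^\<^sub>m p = 1\<^sub>m p" unfolding Ttors_def by auto
  show ?thesis unfolding ptors_abelian_sub_def using sub inK ab pt by blast
qed


end


lemma massoc: "(A :: complex mat) \<in> carrier_mat n n \<Longrightarrow> B \<in> carrier_mat n n \<Longrightarrow> C \<in> carrier_mat n n \<Longrightarrow> A * B * C = A * (B * C)"
  by (rule assoc_mult_mat)

context cycset begin

lemma maxL:
  assumes Hm: "max_ptors_abelian_sub p (Kset p N) H"
    and xH: "Mm p \<sigma> c \<in> H" and sT: "inT p N \<sigma>" and c: "c < p" and k: "(k * c) mod p = 1"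
  shows "H = gen_grp p {\<omega> \<cdot>\<^sub>m 1\<^sub>m p, Mm p \<sigma> c ^\<^sub>m k} \<and> Zs \<subseteq> H \<and> (\<exists>\<tau>. inT p N \<tau> \<and> Mm p \<sigma> c ^\<^sub>m k = Mm p \<tau> 1)"
proof -
  have Hs: "is_subgrp p H" and HK: "H \<subseteq> Kset p N"
    and Hab: "\<And>x y. x \<in> H \<Longrightarrow> y \<in> H \<Longrightarrow> x * y = y * x"
    and Hp: "\<And>M. M \<in> H \<Longrightarrow> M ^\<^sub>m p = 1\<^sub>m p"
    and Hmax: "\<And>H'. ptors_abelian_sub p (Kset p N) H' \<Longrightarrow> H \<subseteq> H' \<Longrightarrow> H' = H"
    using Hm unfolding max_ptors_abelian_sub_def ptors_abelian_sub_def by blast+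
  define y where "y = Mm p \<sigma> c ^\<^sub>m k"
  have yH: "y \<in> H" unfolding y_def by (rule subgrp_pow[OF Hs xH])
  obtain \<tau> where tau: "inT p N \<tau>" "y = Mm p \<tau> 1" using Kset_pow[OF sT c, of k] k unfolding y_def by auto
  have yC: "y \<in> carrier_mat p p" using tau by simp
  have yp: "y ^\<^sub>m p = 1\<^sub>m p" using Hp[OF yH] .
  have ypow: "\<exists>\<rho>. inT p N \<rho> \<and> y ^\<^sub>m n = Mm p \<rho> (n mod p)" for n
    using Kset_pow[OF tau(1) p1, of n] unfolding tau(2) by simp
  have ypK: "y ^\<^sub>m n \<in> Kset p N" for n
    using ypow[of n] KsetI p0 by auto
  have sccomm: "sc j * y ^\<^sub>m n = y ^\<^sub>m n * sc j" for j n
  proof -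
    obtain \<rho> where "y ^\<^sub>m n = Mm p \<rho> (n mod p)" using ypow[of n] by blast
    then show ?thesis using sc_comm[of "n mod p" j \<rho>] p0 by simp
  qed
  have ypp: "y ^\<^sub>m (p * n) = 1\<^sub>m p" for n
    using pow_pow_mat[OF yC, of p n] yp one_pow_mat by simp
  have Cs: "sc j \<in> carrier_mat p p" for j by simp
  have Cy: "y ^\<^sub>m n \<in> carrier_mat p p" for n using yC by simp
  have prodW: "(sc j * y ^\<^sub>m a) * (sc j' * y ^\<^sub>m b) = sc (j + j') * y ^\<^sub>m (a + b)" for j j' a b
  proof -
    have "(sc j * y ^\<^sub>m a) * (sc j' * y ^\<^sub>m b) = sc j * (y ^\<^sub>m a * (sc j' * y ^\<^sub>m b))"
      by (rule massoc[OF Cs Cy mult_carrier_mat[OF Cs Cy]])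
    also have "y ^\<^sub>m a * (sc j' * y ^\<^sub>m b) = (y ^\<^sub>m a * sc j') * y ^\<^sub>m b"
      by (rule massoc[OF Cy Cs Cy, symmetric])
    also have "y ^\<^sub>m a * sc j' = sc j' * y ^\<^sub>m a" by (rule sccomm[symmetric])
    also have "(sc j' * y ^\<^sub>m a) * y ^\<^sub>m b = sc j' * (y ^\<^sub>m a * y ^\<^sub>m b)"
      by (rule massoc[OF Cs Cy Cy])
    also have "sc j * (sc j' * (y ^\<^sub>m a * y ^\<^sub>m b)) = (sc j * sc j') * (y ^\<^sub>m a * y ^\<^sub>m b)"
      by (rule massoc[OF Cs Cs mult_carrier_mat[OF Cy Cy], symmetric])
    also have "\<dots> = sc (j + j') * y ^\<^sub>m (a + b)"
      using sc_mult pow_add_mat[OF yC, of a b] by simp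
    finally show ?thesis .
  qed
  define W where "W = {sc j * y ^\<^sub>m n | j n. True}"
  have WI: "sc j * y ^\<^sub>m n \<in> W" for j n unfolding W_def by blast
  have WE: "w \<in> W \<Longrightarrow> (\<And>j n. w = sc j * y ^\<^sub>m n \<Longrightarrow> P) \<Longrightarrow> P" for w P unfolding W_def by blast
  have one: "sc 0 * y ^\<^sub>m 0 = 1\<^sub>m p" using yC sc_zero by simp
  have Wsub: "is_subgrp p W"
    unfolding is_subgrp_def
  proof (intro conjI ballI)
    show "W \<subseteq> carrier_mat p p" by (auto elim!: WE simp: mult_carrier_mat[OF Cs Cy])
    show "1\<^sub>m p \<in> W" using WI[of 0 0] one by simp
  next
    fix u v assume "u \<in> W" "v \<in> W"
    then obtain j a j' b where "u = sc j * y ^\<^sub>m a" "v = sc j' * y ^\<^sub>m b" by (auto elim!: WE)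
    then show "u * v \<in> W" using prodW WI by simp
  next
    fix u assume "u \<in> W"
    then obtain j a where u: "u = sc j * y ^\<^sub>m a" by (auto elim!: WE)
    have e: "j + j * (p - 1) = p * j" "j * (p - 1) + j = p * j" "a + a * (p - 1) = p * a" "a * (p - 1) + a = p * a"
      using p0 by (cases p; simp add: algebra_simps)+
    have "u * (sc (j * (p - 1)) * y ^\<^sub>m (a * (p - 1))) = 1\<^sub>m p"
      unfolding u prodW e using sc_one[of "p * j"] ypp[of a] by simp
    moreover have "(sc (j * (p - 1)) * y ^\<^sub>m (a * (p - 1))) * u = 1\<^sub>m p"
      unfolding u prodW e using sc_one[of "p * j"] ypp[of a] by simp
    ultimately show "\<exists>v\<in>W. u * v = 1\<^sub>m p \<and> v * u = 1\<^sub>m p" using WI by blast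
  qed
  have WK: "W \<subseteq> Kset p N"
  proof
    fix w assume "w \<in> W"
    then obtain j n where w: "w = sc j * y ^\<^sub>m n" by (auto elim!: WE)
    show "w \<in> Kset p N" unfolding w using Kset_subgrp[OF p1] sc_K ypK unfolding is_subgrp_def by blast
  qed
  have Wab: "\<forall>u\<in>W. \<forall>v\<in>W. u * v = v * u"
  proof (intro ballI)
    fix u v assume "u \<in> W" "v \<in> W"
    then obtain j a j' b where "u = sc j * y ^\<^sub>m a" "v = sc j' * y ^\<^sub>m b" by (auto elim!: WE)
    then show "u * v = v * u" using prodW by (simp add: add.commute)
  qed
  have Wp: "\<forall>u\<in>W. u ^\<^sub>m p = 1\<^sub>m p"
  proof
    fix u assume "u \<in> W"
    then obtain j a where u: "u = sc j * y ^\<^sub>m a" by (auto elim!: WE)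
    have "u ^\<^sub>m p = sc j ^\<^sub>m p * (y ^\<^sub>m a) ^\<^sub>m p"
      unfolding u by (rule comm_pow_mat[OF Cs Cy sccomm])
    also have "sc j ^\<^sub>m p = 1\<^sub>m p"
    proof -
      have "sc j ^\<^sub>m p = Mm p (\<lambda>i. (\<omega> ^ j) ^ p) 0" by (rule diag_pow_Mm[OF p0])
      also have "\<dots> = sc (j * p)" by (simp add: power_mult)
      also have "\<dots> = 1\<^sub>m p" by (rule sc_one) simp
      finally show ?thesis .
    qed
    also have "(y ^\<^sub>m a) ^\<^sub>m p = 1\<^sub>m p" using pow_pow_mat[OF yC, of a p] ypp[of a] by (simp add: mult.commute)
    finally show "u ^\<^sub>m p = 1\<^sub>m p" by simp
  qed
  have Wpt: "ptors_abelian_sub p (Kset p N) W"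
    unfolding ptors_abelian_sub_def using Wsub WK Wab Wp by blast
  have HW: "H \<subseteq> W"
  proof
    fix h assume hH: "h \<in> H"
    then obtain \<eta> d where h: "h = Mm p \<eta> d" "inT p N \<eta>" "d < p" using HK unfolding Kset_def by blast
    obtain \<rho> where rho: "inT p N \<rho>" "y ^\<^sub>m (p - d) = Mm p \<rho> ((p - d) mod p)" using ypow[of "p - d"] by blast
    define h' where "h' = h * y ^\<^sub>m (p - d)"
    have h'H: "h' \<in> H" unfolding h'_def using Hs hH subgrp_pow[OF Hs yH] unfolding is_subgrp_def by blast
    have "h' = Mm p (\<lambda>i. \<eta> i * \<rho> ((i + p - d) mod p)) ((d + (p - d) mod p) mod p)"
      unfolding h'_def h(1) rho(2) using h(3) p0 by (simp add: Mm_mult)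
    moreover have "(d + (p - d) mod p) mod p = 0"
    proof (cases "d = 0")
      case True then show ?thesis by simp
    next
      case False then show ?thesis using h(3) by simp
    qed
    ultimately obtain \<zeta> where h': "h' = Mm p \<zeta> 0" by auto
    have "h' * y = y * h'" by (rule Hab[OF h'H yH])
    then have cm: "Mm p \<zeta> 0 * Mm p \<tau> 1 = Mm p \<tau> 1 * Mm p \<zeta> 0" unfolding h' tau(2) .
    have tnz: "\<And>i. i < p \<Longrightarrow> \<tau> i \<noteq> 0" using inT_nz[OF tau(1)] by blast
    have const: "\<And>i. i < p \<Longrightarrow> \<zeta> i = \<zeta> 0" by (rule diag_comm_const[OF tnz cm])
    have "Mm p (\<lambda>i. \<zeta> i ^ p) 0 = Mm p (\<lambda>_. 1) 0"
      using Hp[OF h'H] unfolding h' diag_pow_Mm[OF p0] one_Mm .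
    then have "\<zeta> 0 ^ p = 1" using Mm_eq_fun[OF p0 _ p0] by blast
    from const_sc[of \<zeta>, OF const this] obtain j where hj: "h' = sc j" using h' by blast
    have "h = h * 1\<^sub>m p" using h(1) by simp
    also have "\<dots> = h * (y ^\<^sub>m (p - d) * y ^\<^sub>m d)"
      using pow_add_mat[OF yC, of "p - d" d] yp h(3) by simp
    also have "\<dots> = h' * y ^\<^sub>m d" unfolding h'_def
      by (rule massoc[symmetric]) (use h(1) Cy in auto)
    also have "\<dots> = sc j * y ^\<^sub>m d" using hj by simp
    finally show "h \<in> W" using WI by simp
  qed
  have HeqW: "W = H" by (rule Hmax[OF Wpt HW])
  have om1: "\<omega> \<cdot>\<^sub>m 1\<^sub>m p = sc 1 * y ^\<^sub>m 0" using yC by (simp add: smult_one_Mm)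
  have y1: "y = sc 0 * y ^\<^sub>m 1" using yC sc_zero by simp
  have gen: "gen_grp p {\<omega> \<cdot>\<^sub>m 1\<^sub>m p, y} = W"
  proof (rule gen_grp_char[OF Wsub])
    show "{\<omega> \<cdot>\<^sub>m 1\<^sub>m p, y} \<subseteq> W" using WI om1 y1 by (metis empty_subsetI insert_subset)
  next
    fix G assume G: "is_subgrp p G" "{\<omega> \<cdot>\<^sub>m 1\<^sub>m p, y} \<subseteq> G"
    show "W \<subseteq> G"
    proof
      fix w assume "w \<in> W"
      then obtain j n where w: "w = sc j * y ^\<^sub>m n" by (auto elim!: WE)
      have "sc j \<in> G" using subgrp_pow[OF G(1), of "\<omega> \<cdot>\<^sub>m 1\<^sub>m p" j] G(2) sc_pow by simp
      moreover have "y ^\<^sub>m n \<in> G" using subgrp_pow[OF G(1), of y n] G(2) by simp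
      ultimately show "w \<in> G" using G(1) unfolding w is_subgrp_def by blast
    qed
  qed
  have ZW: "Zs \<subseteq> W"
  proof
    fix z assume "z \<in> Zs"
    then obtain j where "z = sc j" unfolding Zs_def by blast
    then have "z = sc j * y ^\<^sub>m 0" using yC by (simp del: pow_mat.simps) (simp add: \<open>z = sc j\<close>)
    then show "z \<in> W" using WI[of j 0] by metis
  qed
  show ?thesis using HeqW gen ZW tau y_def by auto
qed

end


context cycset begin

definition nondiag :: "complex mat set \<Rightarrow> bool" where
  "nondiag H \<longleftrightarrow> (\<exists>\<sigma> c. Mm p \<sigma> c \<in> H \<and> inT p N \<sigma> \<and> 0 < c \<and> c < p)"

lemma diag_case:
  assumes Hm: "max_ptors_abelian_sub p (Kset p N) H" and nd: "\<not> nondiag H"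
  shows "H = Ttors p p"
proof -
  have HK: "H \<subseteq> Kset p N" and Hp: "\<And>M. M \<in> H \<Longrightarrow> M ^\<^sub>m p = 1\<^sub>m p"
    and Hmax: "\<And>H'. ptors_abelian_sub p (Kset p N) H' \<Longrightarrow> H \<subseteq> H' \<Longrightarrow> H' = H"
    using Hm unfolding max_ptors_abelian_sub_def ptors_abelian_sub_def by blast+
  have "H \<subseteq> Ttors p p"
  proof
    fix h assume hH: "h \<in> H"
    then obtain \<eta> d where h: "h = Mm p \<eta> d" "inT p N \<eta>" "d < p" using HK unfolding Kset_def by blast
    have "\<not> (Mm p \<eta> d \<in> H \<and> inT p N \<eta> \<and> 0 < d \<and> d < p)" using nd unfolding nondiag_def by blast
    then have d0: "d = 0" using hH h by auto
    have "Mm p (\<lambda>i. \<eta> i ^ p) 0 = Mm p (\<lambda>_. 1) 0"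
      using Hp[OF hH] unfolding h(1) d0 diag_pow_Mm[OF p0] one_Mm .
    then have "\<forall>q<p. \<eta> q ^ p = 1" using Mm_eq_fun[OF p0] by blast
    then have "inT p p \<eta>" using h(2) unfolding inT_def by blast
    then show "h \<in> Ttors p p" unfolding Ttors_eq[OF p0] h(1) d0 by blast
  qed
  then show ?thesis using Hmax[OF T_ptors] by blast
qed

lemma nondiag_case:
  assumes Hm: "max_ptors_abelian_sub p (Kset p N) H"
    and xH: "Mm p \<sigma> c \<in> H" and sT: "inT p N \<sigma>" and c: "0 < c" "c < p"
  shows "\<exists>k. (k * c) mod p = 1 \<and> H = gen_grp p {\<omega> \<cdot>\<^sub>m 1\<^sub>m p, Mm p \<sigma> c ^\<^sub>m k} \<and> Zs \<subseteq> H
     \<and> (\<exists>\<tau>. inT p N \<tau> \<and> Mm p \<sigma> c ^\<^sub>m k = Mm p \<tau> 1)"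
proof -
  obtain k where k: "(k * c) mod p = 1" using inv_mod_exists[OF pprime c] by blast
  show ?thesis using maxL[OF Hm xH sT c(2) k] k by blast
qed

lemma Zs_sub_max: assumes Hm: "max_ptors_abelian_sub p (Kset p N) H" shows "Zs \<subseteq> H"
proof (cases "nondiag H")
  case True
  then obtain \<sigma> c where "Mm p \<sigma> c \<in> H" "inT p N \<sigma>" "0 < c" "c < p" unfolding nondiag_def by blast
  then show ?thesis using nondiag_case[OF Hm] by blast
next
  case False
  then have "H = Ttors p p" using diag_case[OF Hm] by blast
  then show ?thesis using sc_T unfolding Zs_def by blast
qed

lemma diag_in_nondiag:
  assumes Hm: "max_ptors_abelian_sub p (Kset p N) H" and nd: "nondiag H"
    and xH: "Mm p \<eta> 0 \<in> H"
  shows "Mm p \<eta> 0 \<in> Zs"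
proof -
  have Hs: "is_subgrp p H"
    and Hab: "\<And>x y. x \<in> H \<Longrightarrow> y \<in> H \<Longrightarrow> x * y = y * x"
    and Hp: "\<And>M. M \<in> H \<Longrightarrow> M ^\<^sub>m p = 1\<^sub>m p"
    using Hm unfolding max_ptors_abelian_sub_def ptors_abelian_sub_def by blast+
  obtain \<sigma> c where s: "Mm p \<sigma> c \<in> H" "inT p N \<sigma>" "0 < c" "c < p" using nd unfolding nondiag_def by blast
  obtain k \<tau> where kt: "inT p N \<tau>" "Mm p \<sigma> c ^\<^sub>m k = Mm p \<tau> 1" using nondiag_case[OF Hm s] by blast
  have yH: "Mm p \<tau> 1 \<in> H" using subgrp_pow[OF Hs s(1), of k] kt(2) by simp
  have cm: "Mm p \<eta> 0 * Mm p \<tau> 1 = Mm p \<tau> 1 * Mm p \<eta> 0" by (rule Hab[OF xH yH])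
  have tnz: "\<And>i. i < p \<Longrightarrow> \<tau> i \<noteq> 0" using inT_nz[OF kt(1)] by blast
  have const: "\<And>i. i < p \<Longrightarrow> \<eta> i = \<eta> 0" by (rule diag_comm_const[OF tnz cm])
  have "Mm p (\<lambda>i. \<eta> i ^ p) 0 = Mm p (\<lambda>_. 1) 0"
    using Hp[OF xH] unfolding diag_pow_Mm[OF p0] one_Mm .
  then have "\<eta> 0 ^ p = 1" using Mm_eq_fun[OF p0 _ p0] by blast
  from const_sc[of \<eta>, OF const this] obtain j where "Mm p \<eta> 0 = sc j" by blast
  then show ?thesis unfolding Zs_def by blast
qed

lemma inter_max:
  assumes H1: "max_ptors_abelian_sub p (Kset p N) H1" and H2: "max_ptors_abelian_sub p (Kset p N) H2"
    and ne: "H1 \<noteq> H2"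
  shows "H1 \<inter> H2 = Zs"
proof
  show "Zs \<subseteq> H1 \<inter> H2" using Zs_sub_max[OF H1] Zs_sub_max[OF H2] by blast
next
  show "H1 \<inter> H2 \<subseteq> Zs"
  proof
    fix x assume x: "x \<in> H1 \<inter> H2"
    have "H1 \<subseteq> Kset p N" using H1 unfolding max_ptors_abelian_sub_def ptors_abelian_sub_def by blast
    then obtain \<eta> d where xd: "x = Mm p \<eta> d" "inT p N \<eta>" "d < p" using x unfolding Kset_def by blast
    show "x \<in> Zs"
    proof (cases "d = 0")
      case False
      obtain k where k: "(k * d) mod p = 1" using inv_mod_exists[OF pprime _ xd(3)] False by blast
      have "H1 = gen_grp p {\<omega> \<cdot>\<^sub>m 1\<^sub>m p, Mm p \<eta> d ^\<^sub>m k}"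
        using maxL[OF H1 _ xd(2) xd(3) k] x xd(1) by blast
      moreover have "H2 = gen_grp p {\<omega> \<cdot>\<^sub>m 1\<^sub>m p, Mm p \<eta> d ^\<^sub>m k}"
        using maxL[OF H2 _ xd(2) xd(3) k] x xd(1) by blast
      ultimately show ?thesis using ne by simp
    next
      case True
      show ?thesis
      proof (cases "nondiag H1")
        case True
        then show ?thesis using diag_in_nondiag[OF H1 True] x xd(1) \<open>d = 0\<close> by blast
      next
        case F1: False
        show ?thesis
        proof (cases "nondiag H2")
          case True
          then show ?thesis using diag_in_nondiag[OF H2 True] x xd(1) \<open>d = 0\<close> by blast
        next
          case False
          then show ?thesis using diag_case[OF H1 F1] diag_case[OF H2 False] ne by simp
        qed
      qed
    qed
  qed
qed

end

theorem corollary1: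
  fixes p m :: nat and \<omega> :: complex and Q K :: "complex mat set"
  assumes "prime p" and "odd p" and "m \<ge> 1"
    and "\<omega> = cis (2 * pi / real p)"
    and "Q = Ttors p (p ^ m)" and "K = KQ p Q"
  shows "(\<forall>H. max_ptors_abelian_sub p K H \<longrightarrow>
            H = Ttors p p \<or> (\<exists>S\<in>Q. H = gen_grp p {\<omega> \<cdot>\<^sub>m 1\<^sub>m p, S * Xmat p}))
       \<and> center_grp K = gen_grp p {\<omega> \<cdot>\<^sub>m 1\<^sub>m p}
       \<and> (\<forall>H1 H2. max_ptors_abelian_sub p K H1 \<and> max_ptors_abelian_sub p K H2 \<and> H1 \<noteq> H2
            \<longrightarrow> H1 \<inter> H2 = center_grp K)"
proof -
  have "p \<noteq> 0" "p \<noteq> 1" using assms(1) not_prime_0 not_prime_1 by metis+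
  then have p2: "2 \<le> p" by simp
  have "p \<noteq> 2" using assms(2) by auto
  then have p3: "3 \<le> p" using p2 by simp
  have pN: "p dvd p ^ m" using assms(3) by (simp add: dvd_power)
  interpret cs: cycset p "p ^ m" \<omega>
    by unfold_locales (use p3 assms(1) pN assms(4) in auto)
  have p1: "1 < p" using p3 by simp
  have p0: "0 < p" using p3 by simp
  have KK: "K = Kset p (p ^ m)" using assms(5,6) KQ_eq[OF p1] by simp
  have C: "center_grp K = gen_grp p {\<omega> \<cdot>\<^sub>m 1\<^sub>m p}" unfolding KK cs.center_K cs.gen_Z ..
  have P1: "H = Ttors p p \<or> (\<exists>S\<in>Q. H = gen_grp p {\<omega> \<cdot>\<^sub>m 1\<^sub>m p, S * Xmat p})"
    if Hm: "max_ptors_abelian_sub p K H" for H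
  proof (cases "cs.nondiag H")
    case False
    then show ?thesis using cs.diag_case Hm KK by blast
  next
    case True
    then obtain \<sigma> c where s: "Mm p \<sigma> c \<in> H" "inT p (p ^ m) \<sigma>" "0 < c" "c < p" unfolding cs.nondiag_def by blast
    obtain k \<tau> where kt: "H = gen_grp p {\<omega> \<cdot>\<^sub>m 1\<^sub>m p, Mm p \<sigma> c ^\<^sub>m k}" "inT p (p ^ m) \<tau>" "Mm p \<sigma> c ^\<^sub>m k = Mm p \<tau> 1"
      using cs.nondiag_case[OF Hm[unfolded KK] s] by blast
    have SQ: "Mm p \<tau> 0 \<in> Q" unfolding assms(5) Ttors_eq[OF p0] using kt(2) by blast
    have "Mm p \<tau> 0 * Xmat p = Mm p (\<lambda>i. \<tau> i * (\<lambda>_. 1) ((i + p - 0) mod p)) ((0 + 1) mod p)"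
      unfolding Xmat_Mm[OF p1] using p1 by (simp only: Mm_mult)
    also have "\<dots> = Mm p \<tau> 1" using p1 by simp
    finally have "Mm p \<sigma> c ^\<^sub>m k = Mm p \<tau> 0 * Xmat p" using kt(3) by simp
    then show ?thesis using kt(1) SQ by auto
  qed
  have P3: "H1 \<inter> H2 = center_grp K"
    if "max_ptors_abelian_sub p K H1" "max_ptors_abelian_sub p K H2" "H1 \<noteq> H2" for H1 H2
    using cs.inter_max[of H1 H2] that unfolding KK cs.center_K by blast
  show ?thesis using P1 C P3 by blast
qed


end
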